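(* Let $(G,c)$ be a colored DAG containing edges $ij$ and $kl$, and let $A\in\mathcal A_G(ij)$ and $B\in\mathcal A_G(kl)$. If $c(ij)=c(kl)$ then $\mathrm{ecr}_c(ij,kl;A,B)$ vanishes at every $\Sigma\in\mathcal M(G,c)$. If $c(ij)\neq c(kl)$, then $\mathrm{ecr}_c(ij,kl;A,B)$ does not vanish at a generic $\Sigma\in\mathcal M(G,c)$ (i.e. it vanishes only on a proper algebraic subset of $\mathcal M(G,c)$).
   Context: $G=(V,E)$ a DAG, $c:V\sqcup E\to C$ with $c(V)\cap c(E)=\emptyset$. $\mathcal M(G,c)$ is the set of $\phi_G(\Omega,\Lambda)=(I-\Lambda)^{-T}\Omega(I-\Lambda)^{-1}$ with $\Omega=\mathrm{diag}(\omega_i)$, $\omega_i>0$, $\lambda_{ij}=0$ for $ij\notin E$, $\omega_i=\omega_k$ when $c(i)=c(k)$, $\lambda_{ij}=\lambda_{kl}$ when $c(ij)=c(kl)$. With $\Sigma_{ij|K}$ the submatrix with rows $(i,K)$, columns $(j,K)$, let $\lambda_{ij|A}(\Sigma)=|\Sigma_{ij|A\setminus\{i\}}|/|\Sigma_A|$; $\mathcal A_G(ij)$ is the set of $A\subseteq V$ with $\lambda_{ij|A}(\phi_G(\Omega,\Lambda))=\lambda_{ij}$ for all parameters of the uncolored model. $\mathrm{ecr}_c(ij,kl;A,B)=|\Sigma_A|\,|\Sigma_B|\,(\lambda_{ij|A}(\Sigma)-\lambda_{kl|B}(\Sigma))$. *)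

theory Defs
  imports "Jordan_Normal_Form.Determinant" "Jordan_Normal_Form.Gauss_Jordan_Elimination"
begin

text \<open>Vertices are V = {0..<n}; an edge ij is the pair (i,j) meaning i -> j.
  A colouring is given by cV (vertex colours) and cE (edge colours).\<close>

definition inv_mat :: "real mat \<Rightarrow> real mat" where
  "inv_mat M = the (mat_inverse M)"

definition Omega_mat :: "nat \<Rightarrow> (nat \<Rightarrow> real) \<Rightarrow> real mat" where
  "Omega_mat n w = mat n n (\<lambda>(i,j). if i = j then w i else 0)"

definition phiG :: "nat \<Rightarrow> (nat \<Rightarrow> real) \<Rightarrow> real mat \<Rightarrow> real mat" where
  "phiG n w L = transpose_mat (inv_mat (1\<^sub>m n - L)) * Omega_mat n w * inv_mat (1\<^sub>m n - L)"

definition params :: "nat \<Rightarrow> (nat \<times> nat) set \<Rightarrow> (nat \<Rightarrow> real) \<Rightarrow> real mat \<Rightarrow> bool" where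
  "params n E w L \<longleftrightarrow> L \<in> carrier_mat n n \<and> (\<forall>i<n. w i > 0) \<and>
     (\<forall>i<n. \<forall>j<n. (i,j) \<notin> E \<longrightarrow> L $$ (i,j) = 0)"

definition params_col :: "nat \<Rightarrow> (nat \<times> nat) set \<Rightarrow> (nat \<Rightarrow> 'c) \<Rightarrow> (nat \<times> nat \<Rightarrow> 'c)
    \<Rightarrow> (nat \<Rightarrow> real) \<Rightarrow> real mat \<Rightarrow> bool" where
  "params_col n E cV cE w L \<longleftrightarrow> params n E w L \<and>
     (\<forall>i<n. \<forall>k<n. cV i = cV k \<longrightarrow> w i = w k) \<and>
     (\<forall>e\<in>E. \<forall>f\<in>E. cE e = cE f \<longrightarrow> L $$ e = L $$ f)"

definition model_col :: "nat \<Rightarrow> (nat \<times> nat) set \<Rightarrow> (nat \<Rightarrow> 'c) \<Rightarrow> (nat \<times> nat \<Rightarrow> 'c) \<Rightarrow> real mat set" where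
  "model_col n E cV cE = {phiG n w L | w L. params_col n E cV cE w L}"

definition submat_list :: "real mat \<Rightarrow> nat list \<Rightarrow> nat list \<Rightarrow> real mat" where
  "submat_list S rs cs = mat (length rs) (length cs) (\<lambda>(a,b). S $$ (rs ! a, cs ! b))"

definition pminor :: "real mat \<Rightarrow> nat set \<Rightarrow> real" where
  "pminor S A = det (submat_list S (sorted_list_of_set A) (sorted_list_of_set A))"

definition cminor :: "real mat \<Rightarrow> nat \<Rightarrow> nat \<Rightarrow> nat set \<Rightarrow> real" where
  "cminor S i j K = det (submat_list S (i # sorted_list_of_set K) (j # sorted_list_of_set K))"

definition lam_cond :: "real mat \<Rightarrow> nat \<Rightarrow> nat \<Rightarrow> nat set \<Rightarrow> real" where
  "lam_cond S i j A = cminor S i j (A - {i}) / pminor S A"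

definition AG :: "nat \<Rightarrow> (nat \<times> nat) set \<Rightarrow> nat \<times> nat \<Rightarrow> nat set set" where
  "AG n E e = {A. A \<subseteq> {0..<n} \<and>
      (\<forall>w L. params n E w L \<longrightarrow> lam_cond (phiG n w L) (fst e) (snd e) A = L $$ e)}"

definition ecr :: "nat \<times> nat \<Rightarrow> nat \<times> nat \<Rightarrow> nat set \<Rightarrow> nat set \<Rightarrow> real mat \<Rightarrow> real" where
  "ecr e f A B S = pminor S A * pminor S B *
      (lam_cond S (fst e) (snd e) A - lam_cond S (fst f) (snd f) B)"

end

theory Submission
  imports Defs
begin

theorem proposition5p2:
  fixes n :: nat and E :: "(nat \<times> nat) set"
    and cV :: "nat \<Rightarrow> 'c" and cE :: "nat \<times> nat \<Rightarrow> 'c"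
    and i j k l :: nat and A B :: "nat set"
  assumes "E \<subseteq> {0..<n} \<times> {0..<n}"
    and "acyclic E"
    and "cV ` {0..<n} \<inter> cE ` E = {}"
    and "(i,j) \<in> E" and "(k,l) \<in> E"
    and "A \<in> AG n E (i,j)" and "B \<in> AG n E (k,l)"
  shows "(cE (i,j) = cE (k,l) \<longrightarrow>
            (\<forall>S \<in> model_col n E cV cE. ecr (i,j) (k,l) A B S = 0))
       \<and> (cE (i,j) \<noteq> cE (k,l) \<longrightarrow>
            {S \<in> model_col n E cV cE. ecr (i,j) (k,l) A B S = 0} \<subset> model_col n E cV cE)"
proof (intro conjI impI)
  assume c: "cE (i,j) = cE (k,l)"
  show "\<forall>S \<in> model_col n E cV cE. ecr (i,j) (k,l) A B S = 0"
  proof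
    fix S assume "S \<in> model_col n E cV cE"
    then obtain w L where S: "S = phiG n w L" and p: "params_col n E cV cE w L"
      unfolding model_col_def by blast
    have pp: "params n E w L" using p unfolding params_col_def by blast
    have "lam_cond S i j A = L $$ (i,j)" using assms(6) pp S unfolding AG_def by auto
    moreover have "lam_cond S k l B = L $$ (k,l)" using assms(7) pp S unfolding AG_def by auto
    moreover have "L $$ (i,j) = L $$ (k,l)" using p c assms(4,5) unfolding params_col_def by blast
    ultimately show "ecr (i,j) (k,l) A B S = 0" unfolding ecr_def by simp
  qed
next
  assume c: "cE (i,j) \<noteq> cE (k,l)"
  define w :: "nat \<Rightarrow> real" where "w = (\<lambda>_. 1)"
  define L :: "real mat" where "L = mat n n (\<lambda>e. if e \<in> E then (if cE e = cE (i,j) then 1 else if cE e = cE (k,l) then 2 else 0) else 0)"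
  have in1: "i < n" "j < n" "k < n" "l < n" using assms(1,4,5) by auto
  have Lij: "L $$ (i,j) = 1" using in1 assms(4) unfolding L_def by simp
  have Lkl: "L $$ (k,l) = 2" using in1 assms(5) c unfolding L_def by simp
  have pp: "params n E w L" unfolding params_def w_def L_def by auto
  have pc: "params_col n E cV cE w L"
    unfolding params_col_def using pp
  proof (intro conjI ballI allI impI)
    fix e f assume e: "e \<in> E" and f: "f \<in> E" and cc: "cE e = cE f"
    have "fst e < n" "snd e < n" "fst f < n" "snd f < n" using e f assms(1) by auto
    then show "L $$ e = L $$ f" using e f cc unfolding L_def
      by (cases e, cases f) auto
  qed (auto simp: w_def)
  define S where "S = phiG n w L"
  have SM: "S \<in> model_col n E cV cE" unfolding model_col_def S_def using pc by blast
  have la: "lam_cond S i j A = 1" using assms(6) pp Lij unfolding AG_def S_def by auto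
  have lb: "lam_cond S k l B = 2" using assms(7) pp Lkl unfolding AG_def S_def by auto
  have pa: "pminor S A \<noteq> 0" using la unfolding lam_cond_def by auto
  have pb: "pminor S B \<noteq> 0" using lb unfolding lam_cond_def by auto
  have "ecr (i,j) (k,l) A B S \<noteq> 0" unfolding ecr_def using la lb pa pb by simp
  then show "{S \<in> model_col n E cV cE. ecr (i,j) (k,l) A B S = 0} \<subset> model_col n E cV cE"
    using SM by blast
qed

end
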